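(* Let $r,s_1,s_2\in\mathbb{N}_+$. Let $\boldsymbol B_0\in\mathbb{R}^{d_1\times d_2}$ be arbitrary and $\boldsymbol B_1,\dots,\boldsymbol B_r\in\{0,1\}^{d_1\times d_2}$ rank-1 matrices with $\langle\boldsymbol B_s,\boldsymbol B_{s'}\rangle=0$ for $s\ne s'$ and whose supports together involve at most $s_1$ rows and at most $s_2$ columns. Let $g_1,\dots,g_r:[0,1]\to\mathbb{R}$ be functions at least one of which is strictly monotonic. Draw $\pi\sim\mathrm{Unif}[0,1]$ and, given $\pi$, set $\boldsymbol X_\pi=\boldsymbol B_0+\sum_{s=1}^r g_s(\pi)\boldsymbol B_s$ (the noiseless case $\sigma=0$ of $\boldsymbol X_\pi=\boldsymbol B_0+\sum_s g_s(\pi)\boldsymbol B_s+\sigma\boldsymbol E$) and $Y_\pi\sim\mathrm{Bernoulli}(\pi)$ with $Y_\pi$ independent of $\boldsymbol X_\pi$ given $\pi$. Let $\mathbb{P}_{\boldsymbol X,Y}$ be the induced joint distribution of $(\boldsymbol X,Y)=(\boldsymbol X_\pi,Y_\pi)$, $\mathcal{X}=\{\boldsymbol X_\pi:\pi\in[0,1]\}$, and $f(\boldsymbol X)=\mathbb{E}(Y|\boldsymbol X)$ on $\mathcal{X}$. Then $f\in\mathcal F_{\mathrm{sgn}}(r,s_1,s_2)$.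
   Context: $\mathrm{sgn}(x)=1$ if $x>0$, $-1$ otherwise. $\Phi(r,s_1,s_2)=\{\boldsymbol X\mapsto\langle\boldsymbol X,\boldsymbol B\rangle+b:\mathrm{rank}(\boldsymbol B)\le r,\ \boldsymbol B\text{ has at most }s_1\text{ nonzero rows and }s_2\text{ nonzero columns},\ b\in\mathbb{R}\}$, with $\langle\boldsymbol X,\boldsymbol B\rangle=\mathrm{tr}(\boldsymbol X\boldsymbol B^T)$. $\mathcal F_{\mathrm{sgn}}(r,s_1,s_2)$ is the set of functions $f:\mathcal{X}\to[-1,1]$ such that for every level $\pi'\in[-1,1]$ there is $\phi\in\Phi(r,s_1,s_2)$ with $\mathrm{sgn}(f(\boldsymbol X)-\pi')=\mathrm{sgn}\,\phi(\boldsymbol X)$ for all $\boldsymbol X\in\mathcal{X}$. *)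

theory Defs
  imports "HOL-Analysis.Analysis" "HOL-Probability.Probability"
begin

text \<open>Sign convention of the paper: sgn x = 1 if x > 0, -1 otherwise.\<close>
definition sgnp :: "real \<Rightarrow> real" where
  "sgnp x = (if x > 0 then 1 else -1)"

definition minner :: "real^'c^'r \<Rightarrow> real^'c^'r \<Rightarrow> real" where
  "minner X B = (\<Sum>i\<in>UNIV. \<Sum>j\<in>UNIV. X $ i $ j * B $ i $ j)"

definition nz_rows :: "real^'c^'r \<Rightarrow> 'r set" where
  "nz_rows B = {i. \<exists>j. B $ i $ j \<noteq> 0}"

definition nz_cols :: "real^'c^'r \<Rightarrow> 'c set" where
  "nz_cols B = {j. \<exists>i. B $ i $ j \<noteq> 0}"

definition Phi :: "nat \<Rightarrow> nat \<Rightarrow> nat \<Rightarrow> (real^'c^'r \<Rightarrow> real) set" where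
  "Phi r s1 s2 = {\<phi>. \<exists>B b. rank B \<le> r \<and> card (nz_rows B) \<le> s1 \<and> card (nz_cols B) \<le> s2
                     \<and> \<phi> = (\<lambda>X. minner X B + b)}"

definition Fsgn :: "(real^'c^'r) set \<Rightarrow> nat \<Rightarrow> nat \<Rightarrow> nat \<Rightarrow> (real^'c^'r \<Rightarrow> real) set" where
  "Fsgn Xs r s1 s2 = {f. (\<forall>X\<in>Xs. f X \<in> {-1..1}) \<and>
      (\<forall>l\<in>{-1..1::real}. \<exists>\<phi>\<in>Phi r s1 s2. \<forall>X\<in>Xs. sgnp (f X - l) = sgnp (\<phi> X))}"

definition Xpi :: "(nat \<Rightarrow> real^'c^'r) \<Rightarrow> (nat \<Rightarrow> real \<Rightarrow> real) \<Rightarrow> nat \<Rightarrow> real \<Rightarrow> real^'c^'r" where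
  "Xpi B g r p = B 0 + (\<Sum>s\<in>{1..r}. g s p *\<^sub>R B s)"

text \<open>Regression function f(X) = E(Y | X): X determines pi (the pi in [0,1] with X_pi = X),
  and given pi, Y ~ Bernoulli(pi); so f(X) is the mean of Bernoulli(pi) for that pi.\<close>
definition regfun :: "(nat \<Rightarrow> real^'c^'r) \<Rightarrow> (nat \<Rightarrow> real \<Rightarrow> real) \<Rightarrow> nat \<Rightarrow> real^'c^'r \<Rightarrow> real" where
  "regfun B g r X = (let p = (THE p. p \<in> {0..1} \<and> Xpi B g r p = X) in
     measure_pmf.expectation (bernoulli_pmf p) (\<lambda>y. if y then 1 else 0))"

end

theory Submission
  imports Defs
begin
lemma mat_neg: "mat (-1) ** (A :: real^'c^'r) = -A"
proof -
  have "\<And>a b::real. (if P then a else 0) * b = (if P then a * b else 0)" for P by simp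
  then show ?thesis by (simp add: matrix_matrix_mult_def mat_def vec_eq_iff)
qed
lemma rank_neg: "rank (-A :: real^'c^'r) = rank A"
  by (metis mat_neg rank_mul_le_right minus_minus le_antisym)
lemma minner_inner: "minner X B = inner X B"
  unfolding minner_def inner_vec_def by simp

theorem proposition4:
  fixes B :: "nat \<Rightarrow> real^'c^'r" and g :: "nat \<Rightarrow> real \<Rightarrow> real"
    and r s1 s2 :: nat
  assumes "r \<ge> 1" "s1 \<ge> 1" "s2 \<ge> 1"
    and "\<forall>s\<in>{1..r}. \<forall>i j. B s $ i $ j \<in> {0, 1}"
    and "\<forall>s\<in>{1..r}. rank (B s) = 1"
    and "\<forall>s\<in>{1..r}. \<forall>s'\<in>{1..r}. s \<noteq> s' \<longrightarrow> minner (B s) (B s') = 0"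
    and "card (\<Union>s\<in>{1..r}. nz_rows (B s)) \<le> s1"
    and "card (\<Union>s\<in>{1..r}. nz_cols (B s)) \<le> s2"
    and "\<exists>s\<in>{1..r}. strict_mono_on {0..1} (g s) \<or> strict_antimono_on {0..1} (g s)"
  shows "regfun B g r \<in> Fsgn (Xpi B g r ` {0..1}) r s1 s2"
proof -
  obtain s0 where s0: "s0 \<in> {1..r}" and mono: "strict_mono_on {0..1} (g s0) \<or> strict_antimono_on {0..1} (g s0)"
    using assms(9) by blast
  define Bs where "Bs = B s0"
  define \<sigma> :: real where "\<sigma> = (if strict_mono_on {0..1} (g s0) then 1 else -1)"
  define G where "G p = \<sigma> * g s0 p" for p
  have Gmono: "G p < G q" if "p \<in> {0..1}" "q \<in> {0..1}" "p < q" for p q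
  proof (cases "strict_mono_on {0..1} (g s0)")
    case True
    then show ?thesis using that strict_mono_onD[OF True] by (simp add: G_def \<sigma>_def)
  next
    case False
    then have "strict_antimono_on {0..1} (g s0)" using mono by simp
    then have "g s0 q < g s0 p" using that by (auto simp: monotone_on_def)
    then show ?thesis using False by (simp add: G_def \<sigma>_def)
  qed
  have Gle: "G p \<le> G q" if "p \<in> {0..1}" "q \<in> {0..1}" "p \<le> q" for p q
    using Gmono[OF that(1,2)] that(3) by (cases "p = q") auto
  have "Bs \<noteq> 0" using assms(5) s0 rank_0 unfolding Bs_def by fastforce
  define k where "k = inner Bs Bs"
  have kpos: "k > 0" using \<open>Bs \<noteq> 0\<close> by (simp add: k_def)
  define c0 where "c0 = inner (B 0) Bs"
  have key: "inner (Xpi B g r p) Bs = c0 + g s0 p * k" for p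
  proof -
    have "(\<Sum>s\<in>{1..r}. g s p * inner (B s) Bs) = g s0 p * inner (B s0) Bs"
    proof -
      have "(\<Sum>s\<in>{1..r}. g s p * inner (B s) Bs) = g s0 p * inner (B s0) Bs + (\<Sum>s\<in>{1..r}-{s0}. g s p * inner (B s) Bs)"
        using s0 by (simp add: sum.remove)
      moreover have "(\<Sum>s\<in>{1..r}-{s0}. g s p * inner (B s) Bs) = 0"
        using s0 assms(6) unfolding Bs_def by (intro sum.neutral) (auto simp: minner_inner)
      ultimately show ?thesis by simp
    qed
    then show ?thesis
      by (simp add: Xpi_def inner_add_left inner_sum_left c0_def k_def Bs_def)
  qed
  have inj: "p = q" if "p \<in> {0..1}" "q \<in> {0..1}" "Xpi B g r p = Xpi B g r q" for p q
  proof -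
    have "g s0 p * k = g s0 q * k" using key[of p] key[of q] that(3) by (metis add_left_cancel)
    then have "G p = G q" using kpos by (simp add: G_def)
    then show ?thesis using Gmono[OF that(1,2)] Gmono[OF that(2,1)] by (cases p q rule: linorder_cases) auto
  qed
  have reg: "regfun B g r (Xpi B g r p) = p" if "p \<in> {0..1}" for p
  proof -
    have "(THE q. q \<in> {0..1} \<and> Xpi B g r q = Xpi B g r p) = p"
      using that inj by (intro the_equality) auto
    then show ?thesis using that by (simp add: regfun_def)
  qed
  define BB where "BB = \<sigma> *\<^sub>R Bs"
  have BBr: "rank BB \<le> r"
  proof -
    have "rank Bs = 1" using assms(5) s0 Bs_def by simp
    moreover have "BB = Bs \<or> BB = - Bs" by (simp add: BB_def \<sigma>_def)
    ultimately show ?thesis using rank_neg[of Bs] assms(1) by auto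
  qed
  have rows: "nz_rows BB = nz_rows Bs" and cols: "nz_cols BB = nz_cols Bs"
    by (auto simp: nz_rows_def nz_cols_def BB_def \<sigma>_def)
  have BBrows: "card (nz_rows BB) \<le> s1"
    unfolding rows Bs_def using s0 assms(7)
    by (meson UN_upper card_mono finite le_trans)
  have BBcols: "card (nz_cols BB) \<le> s2"
    unfolding cols Bs_def using s0 assms(8)
    by (meson UN_upper card_mono finite le_trans)
  have keyBB: "inner (Xpi B g r p) BB = \<sigma> * c0 + G p * k" for p
    using key[of p] by (simp add: BB_def G_def algebra_simps)
  show ?thesis
    unfolding Fsgn_def
  proof (intro CollectI conjI ballI)
    fix X assume "X \<in> Xpi B g r ` {0..1}"
    then show "regfun B g r X \<in> {-1..1}" using reg by auto
  next
    fix l :: real assume l: "l \<in> {-1..1}"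
    define t where "t = (if l < 0 then G 0 - 1 else G l)"
    have tc: "(p > l) \<longleftrightarrow> (G p > t)" if p: "p \<in> {0..1}" for p
    proof (cases "l < 0")
      case True
      then show ?thesis using Gle[of 0 p] p by (auto simp: t_def)
    next
      case False
      then have l01: "l \<in> {0..1}" using l by auto
      then show ?thesis using Gmono[OF l01 p] Gle[OF p l01] False by (auto simp: t_def not_less[symmetric])
    qed
    define \<phi> where "\<phi> X = minner X BB + (- \<sigma> * c0 - k * t)" for X
    have "\<phi> \<in> Phi r s1 s2" unfolding Phi_def \<phi>_def using BBr BBrows BBcols by blast
    moreover have "sgnp (regfun B g r X - l) = sgnp (\<phi> X)" if Xin: "X \<in> Xpi B g r ` {0..1}" for X
    proof -
      obtain p where p: "p \<in> {0..1}" "X = Xpi B g r p" using Xin by auto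
      have "\<phi> X = k * (G p - t)" using keyBB[of p] p(2) by (simp add: \<phi>_def minner_inner algebra_simps)
      then have "(\<phi> X > 0) \<longleftrightarrow> (G p > t)" using kpos by (simp add: zero_less_mult_iff)
      then show ?thesis using tc[OF p(1)] reg[OF p(1)] p(2) by (simp add: sgnp_def)
    qed
    ultimately show "\<exists>\<phi>\<in>Phi r s1 s2. \<forall>X\<in>Xpi B g r ` {0..1}. sgnp (regfun B g r X - l) = sgnp (\<phi> X)"
      by blast
  qed
qed
end
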